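(* Let $\mathcal R=\{\rho(x)x:x\in\bar\Omega\}$ be a near field refractor (in either case $\kappa<-1$ or $-1<\kappa<0$) and let $P\in\bar D$. Then $\mathcal T_{\mathcal R}(P)$ is a closed subset of $\bar\Omega$.
   Context: $\Omega\subset S^{n-1}$ domain with $|\partial\Omega|=0$; $D\subset\mathbb R^n$ in an $(n-1)$-dimensional hypersurface, $\bar D$ compact, $0\notin\bar D$. Case $\kappa<-1$: there is $\tau\in(0,1-\frac1\kappa)$ with $\inf_{x\in\bar\Omega,P\in\bar D}x\cdot\frac P{|P|}\ge\tau+\frac1\kappa$; $r_0\in(0,\frac{\tau^2\kappa^2}{(1+\sqrt2)^2(1-\kappa)^2}\inf_{\bar D}|P|)$; $h(x,P,b)=\frac{(\kappa^2x\cdot P-b)-\sqrt{(\kappa^2x\cdot P-b)^2-(\kappa^2-1)(\kappa^2|P|^2-b^2)}}{\kappa^2-1}$, $I(P,b)=\frac{b+\sqrt{(\kappa^2-1)(\kappa^2|P|^2-b^2)}}{\kappa^2|P|}$, $\Gamma(P,b)=\{h(x,P,b)x:x\cdot P\ge I(P,b)|P|\}$. Near field refractor: $\mathcal R=\{\rho(x)x\}\subset\mathcal C_{r_0}=\{tx:x\in\bar\Omega,0<t\le r_0\}$ such that for each $x_0\in\bar\Omega$ there are $P\in\bar D$, $b\in(\kappa|P|,|P|)$ with $\rho\ge h(\cdot,P,b)$ on $\bar\Omega$, $\rho(x_0)=h(x_0,P,b)$, $\bar\Omega\subset\{x:x\cdot\frac P{|P|}\ge I(P,b)\}$ ("$\Gamma(P,b)$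 supports $\mathcal R$ at $\rho(x_0)x_0$"). Case $-1<\kappa<0$: there is $\tau\in(0,1+\kappa)$ with $x\cdot P\ge(\tau-\kappa)|P|$ on $\bar\Omega\times\bar D$; $r_0\in(0,\frac\tau{1-\kappa}\operatorname{dist}(0,\bar D))$; $h(x,P,b)=\frac{(b-\kappa^2x\cdot P)+\sqrt{(b-\kappa^2x\cdot P)^2-(1-\kappa^2)(b^2-\kappa^2|P|^2)}}{1-\kappa^2}$, $\mathcal O(P,b)=\{h(x,P,b)x:x\cdot P\ge b\}$. Near field refractor: $\mathcal R\subset\mathcal C_{r_0}$ such that for each $x_0$ there are $P\in\bar D$, $b\in(\kappa|P|,|P|)$ with $\rho\le h(\cdot,P,b)$ on $\bar\Omega$ and $\rho(x_0)=h(x_0,P,b)$ ("$\mathcal O(P,b)$ supports $\mathcal R$ at $\rho(x_0)x_0$"). In both cases for all $m\in S^{n-1}$, $x\in\mathcal C_{r_0}$, $\bar D\cap\{x+tm:t\ge0\}$ has at most one point. $\mathcal N_{\mathcal R}(x)=\{P\in\bar D:$ some oval with focus data $(P,b)$ supports $\mathcal R$ at $\rho(x)x\}$; $\mathcal T_{\mathcal R}(P)=\{x\in\bar\Omega:P\in\mathcal N_{\mathcal R}(x)\}$. *)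

theory Defs
  imports "HOL-Analysis.Analysis"
begin

definition sphere_domain :: "'a::euclidean_space set \<Rightarrow> bool" where
  "sphere_domain \<Omega> \<longleftrightarrow> \<Omega> \<noteq> {} \<and> connected \<Omega> \<and>
     openin (top_of_set (sphere 0 1)) \<Omega>"

text \<open>Surface measure of the (relative) boundary of Omega in the sphere is zero,
  expressed via the cone over it: sigma(E) = n * Lebesgue measure of {t x : x in E, 0<t<=1}.\<close>
definition sphere_boundary_null :: "'a::euclidean_space set \<Rightarrow> bool" where
  "sphere_boundary_null \<Omega> \<longleftrightarrow>
     {t *\<^sub>R x | t x. 0 < t \<and> t \<le> 1 \<and> x \<in> closure \<Omega> - \<Omega>} \<in> null_sets lebesgue"

definition cone_r :: "'a::euclidean_space set \<Rightarrow> real \<Rightarrow> 'a set" where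
  "cone_r \<Omega> r0 = {t *\<^sub>R x | t x. x \<in> closure \<Omega> \<and> 0 < t \<and> t \<le> r0}"

definition ray_unique :: "'a::euclidean_space set \<Rightarrow> 'a set \<Rightarrow> real \<Rightarrow> bool" where
  "ray_unique \<Omega> D r0 \<longleftrightarrow> (\<forall>m \<in> sphere 0 1. \<forall>x \<in> cone_r \<Omega> r0.
      \<forall>Q1 Q2. Q1 \<in> closure D \<inter> {x + t *\<^sub>R m | t. t \<ge> 0} \<longrightarrow>
              Q2 \<in> closure D \<inter> {x + t *\<^sub>R m | t. t \<ge> 0} \<longrightarrow> Q1 = Q2)"

definition h1 :: "real \<Rightarrow> 'a::euclidean_space \<Rightarrow> 'a \<Rightarrow> real \<Rightarrow> real" where
  "h1 \<kappa> x P b = ((\<kappa>\<^sup>2 * (x \<bullet> P) - b)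
      - sqrt ((\<kappa>\<^sup>2 * (x \<bullet> P) - b)\<^sup>2 - (\<kappa>\<^sup>2 - 1) * (\<kappa>\<^sup>2 * (norm P)\<^sup>2 - b\<^sup>2))) / (\<kappa>\<^sup>2 - 1)"

definition I1 :: "real \<Rightarrow> 'a::euclidean_space \<Rightarrow> real \<Rightarrow> real" where
  "I1 \<kappa> P b = (b + sqrt ((\<kappa>\<^sup>2 - 1) * (\<kappa>\<^sup>2 * (norm P)\<^sup>2 - b\<^sup>2))) / (\<kappa>\<^sup>2 * norm P)"

definition supports1 :: "real \<Rightarrow> 'a::euclidean_space set \<Rightarrow> ('a \<Rightarrow> real) \<Rightarrow> 'a \<Rightarrow> real \<Rightarrow> 'a \<Rightarrow> bool" where
  "supports1 \<kappa> \<Omega> \<rho> P b x0 \<longleftrightarrow> \<kappa> * norm P < b \<and> b < norm P \<and>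
     (\<forall>x \<in> closure \<Omega>. \<rho> x \<ge> h1 \<kappa> x P b) \<and> \<rho> x0 = h1 \<kappa> x0 P b \<and>
     (\<forall>x \<in> closure \<Omega>. x \<bullet> (P /\<^sub>R norm P) \<ge> I1 \<kappa> P b)"

definition setting1 :: "real \<Rightarrow> 'a::euclidean_space set \<Rightarrow> 'a set \<Rightarrow> real \<Rightarrow> bool" where
  "setting1 \<kappa> \<Omega> D r0 \<longleftrightarrow> \<kappa> < -1 \<and>
     (\<exists>\<tau>. 0 < \<tau> \<and> \<tau> < 1 - 1/\<kappa> \<and>
        (INF z \<in> closure \<Omega> \<times> closure D. fst z \<bullet> (snd z /\<^sub>R norm (snd z))) \<ge> \<tau> + 1/\<kappa> \<and>
        0 < r0 \<and> r0 < \<tau>\<^sup>2 * \<kappa>\<^sup>2 / ((1 + sqrt 2)\<^sup>2 * (1 - \<kappa>)\<^sup>2) * (INF P \<in> closure D. norm P))"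

definition refractor1 :: "real \<Rightarrow> 'a::euclidean_space set \<Rightarrow> 'a set \<Rightarrow> real \<Rightarrow> ('a \<Rightarrow> real) \<Rightarrow> bool" where
  "refractor1 \<kappa> \<Omega> D r0 \<rho> \<longleftrightarrow>
     (\<forall>x \<in> closure \<Omega>. \<rho> x *\<^sub>R x \<in> cone_r \<Omega> r0) \<and>
     (\<forall>x0 \<in> closure \<Omega>. \<exists>P \<in> closure D. \<exists>b. supports1 \<kappa> \<Omega> \<rho> P b x0)"

definition h2 :: "real \<Rightarrow> 'a::euclidean_space \<Rightarrow> 'a \<Rightarrow> real \<Rightarrow> real" where
  "h2 \<kappa> x P b = ((b - \<kappa>\<^sup>2 * (x \<bullet> P))
      + sqrt ((b - \<kappa>\<^sup>2 * (x \<bullet> P))\<^sup>2 - (1 - \<kappa>\<^sup>2) * (b\<^sup>2 - \<kappa>\<^sup>2 * (norm P)\<^sup>2))) / (1 - \<kappa>\<^sup>2)"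

definition supports2 :: "real \<Rightarrow> 'a::euclidean_space set \<Rightarrow> ('a \<Rightarrow> real) \<Rightarrow> 'a \<Rightarrow> real \<Rightarrow> 'a \<Rightarrow> bool" where
  "supports2 \<kappa> \<Omega> \<rho> P b x0 \<longleftrightarrow> \<kappa> * norm P < b \<and> b < norm P \<and>
     (\<forall>x \<in> closure \<Omega>. \<rho> x \<le> h2 \<kappa> x P b) \<and> \<rho> x0 = h2 \<kappa> x0 P b"

definition setting2 :: "real \<Rightarrow> 'a::euclidean_space set \<Rightarrow> 'a set \<Rightarrow> real \<Rightarrow> bool" where
  "setting2 \<kappa> \<Omega> D r0 \<longleftrightarrow> -1 < \<kappa> \<and> \<kappa> < 0 \<and>
     (\<exists>\<tau>. 0 < \<tau> \<and> \<tau> < 1 + \<kappa> \<and>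
        (\<forall>x \<in> closure \<Omega>. \<forall>P \<in> closure D. x \<bullet> P \<ge> (\<tau> - \<kappa>) * norm P) \<and>
        0 < r0 \<and> r0 < \<tau> / (1 - \<kappa>) * setdist {0} (closure D))"

definition refractor2 :: "real \<Rightarrow> 'a::euclidean_space set \<Rightarrow> 'a set \<Rightarrow> real \<Rightarrow> ('a \<Rightarrow> real) \<Rightarrow> bool" where
  "refractor2 \<kappa> \<Omega> D r0 \<rho> \<longleftrightarrow>
     (\<forall>x \<in> closure \<Omega>. \<rho> x *\<^sub>R x \<in> cone_r \<Omega> r0) \<and>
     (\<forall>x0 \<in> closure \<Omega>. \<exists>P \<in> closure D. \<exists>b. supports2 \<kappa> \<Omega> \<rho> P b x0)"

definition supports :: "real \<Rightarrow> 'a::euclidean_space set \<Rightarrow> ('a \<Rightarrow> real) \<Rightarrow> 'a \<Rightarrow> real \<Rightarrow> 'a \<Rightarrow> bool" where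
  "supports \<kappa> \<Omega> \<rho> P b x0 = (if \<kappa> < -1 then supports1 \<kappa> \<Omega> \<rho> P b x0 else supports2 \<kappa> \<Omega> \<rho> P b x0)"

definition normal_map :: "real \<Rightarrow> 'a::euclidean_space set \<Rightarrow> 'a set \<Rightarrow> ('a \<Rightarrow> real) \<Rightarrow> 'a \<Rightarrow> 'a set" where
  "normal_map \<kappa> \<Omega> D \<rho> x = {P \<in> closure D. \<exists>b. supports \<kappa> \<Omega> \<rho> P b x}"

definition trace_map :: "real \<Rightarrow> 'a::euclidean_space set \<Rightarrow> 'a set \<Rightarrow> ('a \<Rightarrow> real) \<Rightarrow> 'a \<Rightarrow> 'a set" where
  "trace_map \<kappa> \<Omega> D \<rho> P = {x \<in> closure \<Omega>. P \<in> normal_map \<kappa> \<Omega> D \<rho> x}"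

end

theory Submission
  imports Defs
begin

lemma clO_sphere: assumes "sphere_domain \<Omega>" shows "closure \<Omega> \<subseteq> sphere (0::'a::euclidean_space) 1"
proof -
  have "\<Omega> \<subseteq> sphere 0 1" using assms unfolding sphere_domain_def
    by (metis openin_subset topspace_euclidean_subtopology)
  then show ?thesis by (simp add: closure_minimal)
qed

lemma rho_facts:
  assumes "\<rho> x *\<^sub>R x \<in> cone_r \<Omega> r0" "closure \<Omega> \<subseteq> sphere (0::'a::euclidean_space) 1" "x \<in> closure \<Omega>"
  shows "\<rho> x \<noteq> 0 \<and> \<bar>\<rho> x\<bar> \<le> r0"
proof -
  obtain t y where e: "\<rho> x *\<^sub>R x = t *\<^sub>R y" and y: "y \<in> closure \<Omega>" and t: "0 < t" "t \<le> r0"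
    using assms(1) unfolding cone_r_def by blast
  have "norm (\<rho> x *\<^sub>R x) = norm (t *\<^sub>R y)" using e by simp
  moreover have "norm x = 1" "norm y = 1" using assms y by auto
  ultimately have "\<bar>\<rho> x\<bar> = t" using t by simp
  then show ?thesis using t by auto
qed

lemma h1_tendsto: assumes "xs \<longlonglongrightarrow> x" "bs \<longlonglongrightarrow> b" "\<kappa>\<^sup>2 \<noteq> 1"
  shows "(\<lambda>k. h1 \<kappa> (xs k) P (bs k)) \<longlonglongrightarrow> h1 \<kappa> x P b"
  unfolding h1_def
  by (intro tendsto_divide tendsto_diff tendsto_add tendsto_mult tendsto_inner tendsto_real_sqrt
      tendsto_power tendsto_const assms(1,2)) (use assms(3) in simp)

lemma h2_tendsto: assumes "xs \<longlonglongrightarrow> x" "bs \<longlonglongrightarrow> b" "\<kappa>\<^sup>2 \<noteq> 1"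
  shows "(\<lambda>k. h2 \<kappa> (xs k) P (bs k)) \<longlonglongrightarrow> h2 \<kappa> x P b"
  unfolding h2_def
  by (intro tendsto_divide tendsto_diff tendsto_add tendsto_mult tendsto_inner tendsto_real_sqrt
      tendsto_power tendsto_const assms(1,2)) (use assms(3) in simp)

lemma I1_tendsto: assumes "bs \<longlonglongrightarrow> b" "\<kappa> \<noteq> 0" "P \<noteq> 0"
  shows "(\<lambda>k. I1 \<kappa> P (bs k)) \<longlonglongrightarrow> I1 \<kappa> P b"
  unfolding I1_def
  by (intro tendsto_divide tendsto_diff tendsto_add tendsto_mult tendsto_real_sqrt
      tendsto_power tendsto_const assms(1)) (use assms(2,3) in simp)

lemma subseq_b:
  fixes bs :: "nat \<Rightarrow> real"
  assumes "\<And>n. bs n \<in> {lo..hi}"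
  obtains b r where "b \<in> {lo..hi}" "strict_mono r" "(bs \<circ> r) \<longlonglongrightarrow> b"
proof -
  have "\<forall>n. bs n \<in> {lo..hi}" using assms by blast
  have sc: "seq_compact {lo..hi}" by (rule compact_imp_seq_compact) simp
  show thesis by (rule seq_compactE[OF sc \<open>\<forall>n. bs n \<in> {lo..hi}\<close>]) (rule that)
qed

lemma case1:
  fixes \<Omega> D :: "'a::euclidean_space set"
  assumes S: "setting1 \<kappa> \<Omega> D r0" and R: "refractor1 \<kappa> \<Omega> D r0 \<rho>"
    and sph: "closure \<Omega> \<subseteq> sphere 0 1" and PD: "P \<in> closure D" and D0: "0 \<notin> closure D"
  shows "closed {x \<in> closure \<Omega>. \<exists>b. supports1 \<kappa> \<Omega> \<rho> P b x}"
proof -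
  have k: "\<kappa> < -1" using S unfolding setting1_def by auto
  obtain \<tau> where tau: "0 < \<tau>" "\<tau> < 1 - 1/\<kappa>"
    and inf: "(INF z \<in> closure \<Omega> \<times> closure D. fst z \<bullet> (snd z /\<^sub>R norm (snd z))) \<ge> \<tau> + 1/\<kappa>"
    and r0: "0 < r0" "r0 < \<tau>\<^sup>2 * \<kappa>\<^sup>2 / ((1 + sqrt 2)\<^sup>2 * (1 - \<kappa>)\<^sup>2) * (INF P \<in> closure D. norm P)"
    using S unfolding setting1_def by auto
  have P0: "P \<noteq> 0" using PD D0 by auto
  have nP: "norm P > 0" using P0 by simp
  have "1 * 1 < (-\<kappa>) * (-\<kappa>)" using k by (intro mult_strict_mono) auto
  then have kk: "\<kappa>\<^sup>2 - 1 > 0" by (simp add: power2_eq_square)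
  then have k2: "\<kappa>\<^sup>2 \<noteq> 1" by simp
  have lowb: "x \<bullet> (P /\<^sub>R norm P) \<ge> \<tau> + 1/\<kappa>" if "x \<in> closure \<Omega>" for x
  proof -
    have "bdd_below ((\<lambda>z. fst z \<bullet> (snd z /\<^sub>R norm (snd z))) ` (closure \<Omega> \<times> closure D))"
    proof (rule bdd_belowI[where m="-1"])
      fix v assume "v \<in> (\<lambda>z. fst z \<bullet> (snd z /\<^sub>R norm (snd z))) ` (closure \<Omega> \<times> closure D)"
      then obtain a Q where v: "v = a \<bullet> (Q /\<^sub>R norm Q)" and a: "a \<in> closure \<Omega>" by auto
      have "norm a = 1" using a sph by auto
      then have "\<bar>a \<bullet> (Q /\<^sub>R norm Q)\<bar> \<le> 1 * norm (Q /\<^sub>R norm Q)"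
        by (metis Cauchy_Schwarz_ineq2)
      also have "\<dots> \<le> 1" by (cases "Q = 0") auto
      finally show "-1 \<le> v" using v by auto
    qed
    then have "(INF z \<in> closure \<Omega> \<times> closure D. fst z \<bullet> (snd z /\<^sub>R norm (snd z))) \<le> x \<bullet> (P /\<^sub>R norm P)"
      using that PD by (intro cINF_lower2[where x="(x,P)"]) auto
    then show ?thesis using inf by linarith
  qed
  have Ple: "r0 < norm P"
  proof -
    define c where "c = \<tau>\<^sup>2 * \<kappa>\<^sup>2 / ((1 + sqrt 2)\<^sup>2 * (1 - \<kappa>)\<^sup>2)"
    have "-\<kappa> * \<tau> < 1 - \<kappa>" using tau k by (simp add: field_simps)
    moreover have "0 \<le> -\<kappa> * \<tau>" using tau k mult_neg_pos[of \<kappa> \<tau>] by simp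
    ultimately have a: "(-\<kappa> * \<tau>)\<^sup>2 < (1 - \<kappa>)\<^sup>2"
      by (intro power_strict_mono) auto
    have s2: "1 + sqrt (2::real) > 0" by (simp add: add_pos_nonneg)
    have b: "(1 + sqrt 2)\<^sup>2 \<ge> 1"
      using mult_mono[of 1 "1+sqrt 2" 1 "1+sqrt 2"] by (simp add: power2_eq_square)
    have "c \<le> \<tau>\<^sup>2 * \<kappa>\<^sup>2 / (1 - \<kappa>)\<^sup>2" unfolding c_def
    proof (rule divide_left_mono)
      have Y: "(1-\<kappa>)\<^sup>2 > 0" using k by simp
      show "(1-\<kappa>)\<^sup>2 \<le> (1 + sqrt 2)\<^sup>2 * (1-\<kappa>)\<^sup>2"
        using mult_right_mono[OF b, of "(1-\<kappa>)\<^sup>2"] Y by simp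
      show "0 \<le> \<tau>\<^sup>2 * \<kappa>\<^sup>2" by simp
      have "(1 + sqrt 2)\<^sup>2 > 0" using s2 by simp
      then show "0 < (1 + sqrt 2)\<^sup>2 * (1-\<kappa>)\<^sup>2 * (1-\<kappa>)\<^sup>2" using Y by simp
    qed
    also have "\<dots> < 1" using a k by (simp add: power_mult_distrib mult.commute)
    finally have c1: "c < 1" .
    have c0: "c \<ge> 0" unfolding c_def by simp
    have I0: "(INF P \<in> closure D. norm P) \<ge> 0"
      using PD by (intro cINF_greatest) auto
    have IP: "(INF P \<in> closure D. norm P) \<le> norm P"
      using PD by (intro cINF_lower) (auto intro: bdd_belowI[where m=0])
    have "r0 < c * (INF P \<in> closure D. norm P)" using r0 unfolding c_def by simp
    also have "\<dots> \<le> (INF P \<in> closure D. norm P)" using c1 I0 mult_right_mono[of c 1 "(INF P \<in> closure D. norm P)"] by simp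
    finally show ?thesis using IP by linarith
  qed
  show ?thesis
  proof (subst closed_sequential_limits, intro allI impI, elim conjE)
    fix xs x assume xsS: "\<forall>n. xs n \<in> {x \<in> closure \<Omega>. \<exists>b. supports1 \<kappa> \<Omega> \<rho> P b x}"
      and lim: "xs \<longlonglongrightarrow> x"
    have xO: "x \<in> closure \<Omega>"
      by (rule closed_sequentially[OF closed_closure _ lim]) (use xsS in auto)
    have "\<forall>n. \<exists>b. supports1 \<kappa> \<Omega> \<rho> P b (xs n)" using xsS by blast
    then obtain bs where bs0: "\<forall>n. supports1 \<kappa> \<Omega> \<rho> P (bs n) (xs n)"
      using choice[of "\<lambda>n b. supports1 \<kappa> \<Omega> \<rho> P b (xs n)"] by blast
    then have bs: "\<And>n. supports1 \<kappa> \<Omega> \<rho> P (bs n) (xs n)" by blast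
    have "bs n \<in> {\<kappa> * norm P .. norm P}" for n using bs[of n] unfolding supports1_def by auto
    then obtain b r where b: "b \<in> {\<kappa> * norm P .. norm P}" and r: "strict_mono r"
      and blim: "(bs \<circ> r) \<longlonglongrightarrow> b" by (rule subseq_b)
    have xlim: "(xs \<circ> r) \<longlonglongrightarrow> x" using LIMSEQ_subseq_LIMSEQ[OF lim r] .
    have ge: "\<rho> y \<ge> h1 \<kappa> y P b" if y: "y \<in> closure \<Omega>" for y
    proof -
      have "(\<lambda>k. h1 \<kappa> ((\<lambda>_. y) k) P ((bs \<circ> r) k)) \<longlonglongrightarrow> h1 \<kappa> y P b"
        by (rule h1_tendsto[OF tendsto_const blim k2])
      then show ?thesis
        by (rule LIMSEQ_le_const2) (use bs y in \<open>auto simp: supports1_def\<close>)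
    qed
    have Ige: "y \<bullet> (P /\<^sub>R norm P) \<ge> I1 \<kappa> P b" if y: "y \<in> closure \<Omega>" for y
    proof -
      have "(\<lambda>k. I1 \<kappa> P ((bs \<circ> r) k)) \<longlonglongrightarrow> I1 \<kappa> P b"
        by (rule I1_tendsto[OF blim]) (use k P0 in auto)
      then show ?thesis
        by (rule LIMSEQ_le_const2) (use bs y in \<open>auto simp: supports1_def\<close>)
    qed
    have eqlim: "(\<lambda>k. \<rho> ((xs \<circ> r) k)) \<longlonglongrightarrow> h1 \<kappa> x P b"
    proof -
      have "(\<lambda>k. h1 \<kappa> ((xs \<circ> r) k) P ((bs \<circ> r) k)) \<longlonglongrightarrow> h1 \<kappa> x P b"
        by (rule h1_tendsto[OF xlim blim k2])
      moreover have "\<And>k. h1 \<kappa> ((xs \<circ> r) k) P ((bs \<circ> r) k) = \<rho> ((xs \<circ> r) k)"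
        using bs unfolding supports1_def by simp
      ultimately show ?thesis by simp
    qed
    obtain P' b' where sp: "supports1 \<kappa> \<Omega> \<rho> P' b' x" using R xO unfolding refractor1_def by blast
    have "h1 \<kappa> x P' b' \<le> h1 \<kappa> x P b"
    proof (rule LIMSEQ_le[OF h1_tendsto[OF xlim tendsto_const k2] eqlim])
      show "\<exists>N. \<forall>n\<ge>N. h1 \<kappa> ((xs \<circ> r) n) P' b' \<le> \<rho> ((xs \<circ> r) n)"
        using sp xsS unfolding supports1_def by auto
    qed
    then have rx: "\<rho> x = h1 \<kappa> x P b" using sp ge[OF xO] unfolding supports1_def by auto
    have rf: "\<rho> x \<noteq> 0 \<and> \<bar>\<rho> x\<bar> \<le> r0"
      using R xO sph by (intro rho_facts) (auto simp: refractor1_def)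
    have nx: "norm x = 1" using xO sph by auto
    define s where "s = x \<bullet> P"
    have sdiv: "x \<bullet> (P /\<^sub>R norm P) = s / norm P" unfolding s_def by (simp add: divide_inverse mult.commute)
    have sle: "s \<le> norm P" unfolding s_def using Cauchy_Schwarz_ineq2[of x P] nx by auto
    have b1: "b \<noteq> \<kappa> * norm P"
    proof
      assume bk: "b = \<kappa> * norm P"
      have "s / norm P \<ge> \<tau> + 1/\<kappa>" using lowb[OF xO] sdiv by simp
      then have "s \<ge> (\<tau> + 1/\<kappa>) * norm P" using nP by (simp add: field_simps)
      then have "\<kappa> * s \<le> \<kappa> * ((\<tau> + 1/\<kappa>) * norm P)" using k by (simp add: mult_left_mono_neg)
      also have "\<dots> = \<kappa> * \<tau> * norm P + norm P" using k by (simp add: field_simps)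
      moreover have "\<kappa> * \<tau> * norm P < 0" using k tau nP by (simp add: mult_neg_pos)
      ultimately have "\<kappa> * s - norm P < 0" by linarith
      then have "\<kappa> * (\<kappa> * s - norm P) > 0" using k by (simp add: mult_neg_neg)
      then have apos: "\<kappa>\<^sup>2 * s - b > 0" unfolding bk
        by (simp add: power2_eq_square algebra_simps)
      have "h1 \<kappa> x P b = ((\<kappa>\<^sup>2 * s - b) - sqrt ((\<kappa>\<^sup>2 * s - b)\<^sup>2)) / (\<kappa>\<^sup>2 - 1)"
        unfolding h1_def s_def bk by (simp add: power_mult_distrib)
      also have "\<dots> = 0" using apos by simp
      finally show False using rx rf by simp
    qed
    have b2: "b \<noteq> norm P"
    proof
      assume bk: "b = norm P"
      have "(\<kappa>\<^sup>2 - 1) * (\<kappa>\<^sup>2 * (norm P)\<^sup>2 - (norm P)\<^sup>2) = ((\<kappa>\<^sup>2 - 1) * norm P)\<^sup>2"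
        by (simp add: power2_eq_square algebra_simps)
      then have sq: "sqrt ((\<kappa>\<^sup>2 - 1) * (\<kappa>\<^sup>2 * (norm P)\<^sup>2 - (norm P)\<^sup>2)) = (\<kappa>\<^sup>2 - 1) * norm P"
        using kk nP by simp
      have "I1 \<kappa> P b = 1" unfolding I1_def bk sq using nP k by (simp add: field_simps)
      then have "s / norm P \<ge> 1" using Ige[OF xO] sdiv by simp
      then have "s \<ge> norm P" using nP by (simp add: field_simps)
      then have ss: "s = norm P" using sle by simp
      have "h1 \<kappa> x P b = ((\<kappa>\<^sup>2 * norm P - norm P) - sqrt ((\<kappa>\<^sup>2 * norm P - norm P)\<^sup>2 - (\<kappa>\<^sup>2 - 1) * (\<kappa>\<^sup>2 * (norm P)\<^sup>2 - (norm P)\<^sup>2))) / (\<kappa>\<^sup>2 - 1)"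
        unfolding h1_def bk using ss s_def by simp
      also have "(\<kappa>\<^sup>2 * norm P - norm P)\<^sup>2 - (\<kappa>\<^sup>2 - 1) * (\<kappa>\<^sup>2 * (norm P)\<^sup>2 - (norm P)\<^sup>2) = 0"
        by (simp add: power2_eq_square algebra_simps)
      also have "((\<kappa>\<^sup>2 * norm P - norm P) - sqrt 0) / (\<kappa>\<^sup>2 - 1) = norm P"
        using kk by (simp add: field_simps)
      finally show False using rx rf Ple by simp
    qed
    have "supports1 \<kappa> \<Omega> \<rho> P b x"
      unfolding supports1_def using b b1 b2 ge Ige rx by auto
    then show "x \<in> {x \<in> closure \<Omega>. \<exists>b. supports1 \<kappa> \<Omega> \<rho> P b x}" using xO by auto
  qed
qed


lemma case2:
  fixes \<Omega> D :: "'a::euclidean_space set"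
  assumes S: "setting2 \<kappa> \<Omega> D r0" and R: "refractor2 \<kappa> \<Omega> D r0 \<rho>"
    and sph: "closure \<Omega> \<subseteq> sphere 0 1" and PD: "P \<in> closure D" and D0: "0 \<notin> closure D"
  shows "closed {x \<in> closure \<Omega>. \<exists>b. supports2 \<kappa> \<Omega> \<rho> P b x}"
proof -
  have k: "-1 < \<kappa>" "\<kappa> < 0" using S unfolding setting2_def by auto
  obtain \<tau> where tau: "0 < \<tau>" "\<tau> < 1 + \<kappa>"
    and lowb: "\<And>x Q. x \<in> closure \<Omega> \<Longrightarrow> Q \<in> closure D \<Longrightarrow> x \<bullet> Q \<ge> (\<tau> - \<kappa>) * norm Q"
    and r0: "0 < r0" "r0 < \<tau> / (1 - \<kappa>) * setdist {0} (closure D)"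
    using S unfolding setting2_def by auto
  have P0: "P \<noteq> 0" using PD D0 by auto
  have nP: "norm P > 0" using P0 by simp
  have "(-\<kappa>) * (-\<kappa>) < 1 * 1" using k by (intro mult_strict_mono) auto
  then have kk: "1 - \<kappa>\<^sup>2 > 0" by (simp add: power2_eq_square)
  then have k2: "\<kappa>\<^sup>2 \<noteq> 1" by simp
  have Ple: "r0 < norm P"
  proof -
    have sd: "setdist {0} (closure D) \<le> norm P" using setdist_le_dist[of 0 "{0}" P "closure D"] PD by simp
    have sd0: "setdist {0} (closure D) \<ge> 0" by (simp add: setdist_pos_le)
    have c1: "\<tau> / (1 - \<kappa>) < 1" using tau k by (simp add: field_simps)
    have "\<tau> / (1 - \<kappa>) * setdist {0} (closure D) \<le> setdist {0} (closure D)"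
      using c1 sd0 mult_right_mono[of "\<tau> / (1 - \<kappa>)" 1 "setdist {0} (closure D)"] by simp
    then show ?thesis using r0 sd by linarith
  qed
  show ?thesis
  proof (subst closed_sequential_limits, intro allI impI, elim conjE)
    fix xs x assume xsS: "\<forall>n. xs n \<in> {x \<in> closure \<Omega>. \<exists>b. supports2 \<kappa> \<Omega> \<rho> P b x}"
      and lim: "xs \<longlonglongrightarrow> x"
    have xO: "x \<in> closure \<Omega>"
      by (rule closed_sequentially[OF closed_closure _ lim]) (use xsS in auto)
    have "\<forall>n. \<exists>b. supports2 \<kappa> \<Omega> \<rho> P b (xs n)" using xsS by blast
    then obtain bs where bs0: "\<forall>n. supports2 \<kappa> \<Omega> \<rho> P (bs n) (xs n)"
      using choice[of "\<lambda>n b. supports2 \<kappa> \<Omega> \<rho> P b (xs n)"] by blast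
    then have bs: "\<And>n. supports2 \<kappa> \<Omega> \<rho> P (bs n) (xs n)" by blast
    have "bs n \<in> {\<kappa> * norm P .. norm P}" for n using bs[of n] unfolding supports2_def by auto
    then obtain b r where b: "b \<in> {\<kappa> * norm P .. norm P}" and r: "strict_mono r"
      and blim: "(bs \<circ> r) \<longlonglongrightarrow> b" by (rule subseq_b)
    have xlim: "(xs \<circ> r) \<longlonglongrightarrow> x" using LIMSEQ_subseq_LIMSEQ[OF lim r] .
    have ge: "\<rho> y \<le> h2 \<kappa> y P b" if y: "y \<in> closure \<Omega>" for y
    proof -
      have "(\<lambda>k. h2 \<kappa> ((\<lambda>_. y) k) P ((bs \<circ> r) k)) \<longlonglongrightarrow> h2 \<kappa> y P b"
        by (rule h2_tendsto[OF tendsto_const blim k2])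
      then show ?thesis
        by (rule LIMSEQ_le_const) (use bs y in \<open>auto simp: supports2_def\<close>)
    qed
    have eqlim: "(\<lambda>k. \<rho> ((xs \<circ> r) k)) \<longlonglongrightarrow> h2 \<kappa> x P b"
    proof -
      have "(\<lambda>k. h2 \<kappa> ((xs \<circ> r) k) P ((bs \<circ> r) k)) \<longlonglongrightarrow> h2 \<kappa> x P b"
        by (rule h2_tendsto[OF xlim blim k2])
      moreover have "\<And>k. h2 \<kappa> ((xs \<circ> r) k) P ((bs \<circ> r) k) = \<rho> ((xs \<circ> r) k)"
        using bs unfolding supports2_def by simp
      ultimately show ?thesis by simp
    qed
    obtain P' b' where sp: "supports2 \<kappa> \<Omega> \<rho> P' b' x" using R xO unfolding refractor2_def by blast
    have "h2 \<kappa> x P b \<le> h2 \<kappa> x P' b'"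
    proof (rule LIMSEQ_le[OF eqlim h2_tendsto[OF xlim tendsto_const k2]])
      show "\<exists>N. \<forall>n\<ge>N. \<rho> ((xs \<circ> r) n) \<le> h2 \<kappa> ((xs \<circ> r) n) P' b'"
        using sp xsS unfolding supports2_def by auto
    qed
    then have rx: "\<rho> x = h2 \<kappa> x P b" using sp ge[OF xO] unfolding supports2_def by auto
    have rf: "\<rho> x \<noteq> 0 \<and> \<bar>\<rho> x\<bar> \<le> r0"
      using R xO sph by (intro rho_facts) (auto simp: refractor2_def)
    have nx: "norm x = 1" using xO sph by auto
    define s where "s = x \<bullet> P"
    have sle: "s \<le> norm P" unfolding s_def using Cauchy_Schwarz_ineq2[of x P] nx by auto
    have sge: "s \<ge> (\<tau> - \<kappa>) * norm P" unfolding s_def using lowb[OF xO PD] .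
    have "(\<tau> - \<kappa>) * norm P > 0" using tau k nP by simp
    then have spos: "s > 0" using sge by linarith
    have b1: "b \<noteq> \<kappa> * norm P"
    proof
      assume bk: "b = \<kappa> * norm P"
      have "\<kappa> * norm P < 0" using k nP by (simp add: mult_neg_pos)
      moreover have "\<kappa>\<^sup>2 * s \<ge> 0" using spos by simp
      ultimately have Bneg: "b - \<kappa>\<^sup>2 * s < 0" unfolding bk by linarith
      have "h2 \<kappa> x P b = ((b - \<kappa>\<^sup>2 * s) + sqrt ((b - \<kappa>\<^sup>2 * s)\<^sup>2)) / (1 - \<kappa>\<^sup>2)"
        unfolding h2_def s_def bk by (simp add: power_mult_distrib)
      also have "\<dots> = 0" using Bneg by simp
      finally show False using rx rf by simp
    qed
    have b2: "b \<noteq> norm P"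
    proof
      assume bk: "b = norm P"
      define A where "A = norm P - \<kappa>\<^sup>2 * s"
      have "\<kappa>\<^sup>2 * s \<le> \<kappa>\<^sup>2 * norm P" using sle by (simp add: mult_left_mono)
      then have Age: "A \<ge> (1 - \<kappa>\<^sup>2) * norm P" unfolding A_def by (simp add: algebra_simps)
      have "0 \<le> (1 - \<kappa>\<^sup>2) * norm P" using kk nP by simp
      then have "((1 - \<kappa>\<^sup>2) * norm P)\<^sup>2 \<le> A\<^sup>2" using Age by (intro power_mono) auto
      moreover have "((1 - \<kappa>\<^sup>2) * norm P)\<^sup>2 = (1 - \<kappa>\<^sup>2) * ((norm P)\<^sup>2 - \<kappa>\<^sup>2 * (norm P)\<^sup>2)"
        by (simp add: power2_eq_square algebra_simps)
      ultimately have d0: "0 \<le> sqrt (A\<^sup>2 - (1 - \<kappa>\<^sup>2) * ((norm P)\<^sup>2 - \<kappa>\<^sup>2 * (norm P)\<^sup>2))" by simp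
      have "h2 \<kappa> x P b = (A + sqrt (A\<^sup>2 - (1 - \<kappa>\<^sup>2) * ((norm P)\<^sup>2 - \<kappa>\<^sup>2 * (norm P)\<^sup>2))) / (1 - \<kappa>\<^sup>2)"
        unfolding h2_def A_def s_def bk by simp
      also have "\<dots> \<ge> A / (1 - \<kappa>\<^sup>2)" using d0 kk by (intro divide_right_mono) auto
      finally have "h2 \<kappa> x P b \<ge> A / (1 - \<kappa>\<^sup>2)" .
      moreover have "A / (1 - \<kappa>\<^sup>2) \<ge> norm P" using Age kk by (simp add: field_simps)
      ultimately show False using rx rf Ple abs_ge_self[of "h2 \<kappa> x P b"] by linarith
    qed
    have "supports2 \<kappa> \<Omega> \<rho> P b x"
      unfolding supports2_def using b b1 b2 ge rx by auto
    then show "x \<in> {x \<in> closure \<Omega>. \<exists>b. supports2 \<kappa> \<Omega> \<rho> P b x}" using xO by auto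
  qed
qed


theorem lemma3p5:
  fixes \<kappa> r0 :: real and \<Omega> D :: "'a::euclidean_space set"
    and \<rho> :: "'a \<Rightarrow> real" and P :: 'a
  assumes "sphere_domain \<Omega>" and "sphere_boundary_null \<Omega>"
    and "compact (closure D)" and "0 \<notin> closure D"
    and "ray_unique \<Omega> D r0"
    and "(setting1 \<kappa> \<Omega> D r0 \<and> refractor1 \<kappa> \<Omega> D r0 \<rho>) \<or>
         (setting2 \<kappa> \<Omega> D r0 \<and> refractor2 \<kappa> \<Omega> D r0 \<rho>)"
    and "P \<in> closure D"
  shows "closed (trace_map \<kappa> \<Omega> D \<rho> P) \<and> trace_map \<kappa> \<Omega> D \<rho> P \<subseteq> closure \<Omega>"
proof
  show "trace_map \<kappa> \<Omega> D \<rho> P \<subseteq> closure \<Omega>" unfolding trace_map_def by auto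
  have sph: "closure \<Omega> \<subseteq> sphere 0 1" using clO_sphere[OF assms(1)] .
  from assms(6) show "closed (trace_map \<kappa> \<Omega> D \<rho> P)"
  proof
    assume a: "setting1 \<kappa> \<Omega> D r0 \<and> refractor1 \<kappa> \<Omega> D r0 \<rho>"
    then have k: "\<kappa> < -1" unfolding setting1_def by auto
    have "trace_map \<kappa> \<Omega> D \<rho> P = {x \<in> closure \<Omega>. \<exists>b. supports1 \<kappa> \<Omega> \<rho> P b x}"
      unfolding trace_map_def normal_map_def supports_def using k assms(7) by auto
    then show ?thesis using case1[OF conjunct1[OF a] conjunct2[OF a] sph assms(7) assms(4)] by simp
  next
    assume a: "setting2 \<kappa> \<Omega> D r0 \<and> refractor2 \<kappa> \<Omega> D r0 \<rho>"
    then have k: "\<not> \<kappa> < -1" unfolding setting2_def by auto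
    have "trace_map \<kappa> \<Omega> D \<rho> P = {x \<in> closure \<Omega>. \<exists>b. supports2 \<kappa> \<Omega> \<rho> P b x}"
      unfolding trace_map_def normal_map_def supports_def using k assms(7) by auto
    then show ?thesis using case2[OF conjunct1[OF a] conjunct2[OF a] sph assms(7) assms(4)] by simp
  qed
qed

end
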